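(* Let $t\in\mathbb N$ and $N=\lvert t\rvert_{\mathtt{01}}$. Then $\frac34N\le v_t\le 5N$.
   Context: For $n\in\mathbb N=\{0,1,\dots\}$, $\lvert n\rvert_{\mathtt{01}}$ denotes the number of maximal blocks of $\mathtt 1$s in the binary expansion of $n$ (equivalently, the number of occurrences of $\mathtt{01}$ in the binary expansion padded with a leading $\mathtt 0$). Define $(v_t)_{t\in\mathbb N}$ by $v_0=0$, $v_1=3/2$, and for all $t\in\mathbb N$: $v_{4t}=v_{2t}$, $v_{4t+2}=v_{2t+1}+1$, $v_{2t+1}=\frac{v_t+v_{t+1}}2+\frac34$. *)

theory Defs
  imports Complex_Main
begin

text \<open>Number of maximal blocks of 1s in the binary expansion of n: counts the
positions i where bit i is 1 and bit i+1 is 0 (the top end of each block),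
i.e. occurrences of 01 in the expansion padded with a leading 0.\<close>
fun blocks01 :: "nat \<Rightarrow> nat" where
  "blocks01 n = (if n = 0 then 0
     else blocks01 (n div 2) + (if odd n \<and> even (n div 2) then 1 else 0))"

declare blocks01.simps [simp del]

function v :: "nat \<Rightarrow> real" where
  "v n = (if n = 0 then 0
          else if n = 1 then 3/2
          else if n mod 4 = 0 then v (n div 2)
          else if n mod 4 = 2 then v (n div 2) + 1
          else (v (n div 2) + v (n div 2 + 1)) / 2 + 3/4)"
  by auto
termination
  by (relation "measure id") (auto, presburger)

end

theory Submission
  imports Defs
begin

declare v.simps [simp del]

lemma v0[simp]: "v 0 = 0" by (subst v.simps) simp
lemma N0[simp]: "blocks01 0 = 0" by (subst blocks01.simps) simp


lemma N_even: "blocks01 (2*m) = blocks01 m"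
  by (cases "m = 0") (simp add: blocks01.simps, subst blocks01.simps, simp)

lemma N_odd: "blocks01 (2*m+1) = blocks01 m + (if even m then 1 else 0)"
  by (subst blocks01.simps) simp

lemma v_even: "v (2*m) = v m + (if odd m then 1 else 0)"
proof (cases "m = 0")
  case True then show ?thesis by simp
next
  case False
  show ?thesis
  proof (cases "even m")
    case True
    then obtain k where "m = 2*k" by auto
    then show ?thesis using False True by (subst v.simps) auto
  next
    case F2: False
    then obtain k where k: "m = 2*k+1" using oddE by blast
    have "2*m \<noteq> 1" by presburger
    moreover have "(2*m) mod 4 = 2" using k by presburger
    ultimately show ?thesis using False F2 by (subst v.simps) auto
  qed
qed

lemma v_odd: "v (2*m+1) = (v m + v (m+1))/2 + 3/4"
proof (cases "m = 0")
  case True then show ?thesis by (simp add: v.simps)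
next
  case False
  have a: "(2*m+1) mod 4 \<noteq> 0" "(2*m+1) mod 4 \<noteq> 2" by presburger+
  have b: "(2*m+1) div 2 = m" by simp
  show ?thesis using False a b by (subst v.simps) simp
qed

lemma N_odd_succ: "odd t \<Longrightarrow> blocks01 (t+1) \<le> blocks01 t"
proof (induction t rule: less_induct)
  case (less t)
  then obtain a where a: "t = 2*a+1" using oddE by blast
  have e: "t + 1 = 2*(a+1)" using a by simp
  show ?case
  proof (cases "even a")
    case True
    then obtain b where "a = 2*b" by auto
    then show ?thesis using e a N_odd[of b] N_even[of "a+1"] N_odd[of a] N_even[of b] True
      by (simp add: N_odd)
  next
    case False
    have "blocks01 (a+1) \<le> blocks01 a" using less.IH[of a] False a by simp
    then show ?thesis using e a N_even[of "a+1"] N_odd[of a] False by simp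
  qed
qed

lemma N_succ_le: "blocks01 (t+1) \<le> blocks01 t + 1"
proof (cases "even t")
  case True
  then obtain b where b: "t = 2*b" by auto
  show ?thesis using b N_odd[of b] N_even[of b] by simp
next
  case False then show ?thesis using N_odd_succ[of t] by simp
qed

lemma N_succ_ge: "blocks01 t \<le> blocks01 (t+1) + 1"
proof (induction t rule: less_induct)
  case (less t)
  show ?case
  proof (cases "even t")
    case True
    then obtain b where b: "t = 2*b" by auto
    show ?thesis using b N_odd[of b] N_even[of b] by simp
  next
    case False
    then obtain a where a: "t = 2*a+1" using oddE by blast
    have e: "t + 1 = 2*(a+1)" using a by simp
    show ?thesis
    proof (cases "even a")
      case True
      then obtain b where "a = 2*b" by auto
      then show ?thesis using e a N_even[of "a+1"] N_odd[of a] N_odd[of b] N_even[of b] True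
        by simp
    next
      case F: False
      have "blocks01 a \<le> blocks01 (a+1) + 1" using less.IH[of a] a by simp
      then show ?thesis using e a N_even[of "a+1"] N_odd[of a] F by simp
    qed
  qed
qed

lemma N_even_succ: "even t \<Longrightarrow> blocks01 t \<le> blocks01 (t+1)"
proof -
  assume "even t"
  then obtain b where b: "t = 2*b" by auto
  show ?thesis using b N_odd[of b] N_even[of b] by simp
qed

lemma N_mod2: "t mod 4 = 2 \<Longrightarrow> blocks01 (t+1) = blocks01 t"
proof -
  assume h: "t mod 4 = 2"
  have "t = 2*(t div 2)" "odd (t div 2)" using h by presburger+
  then obtain b where b: "t = 2*b" "odd b" by blast
  show ?thesis using b N_odd[of b] N_even[of b] by simp
qed

lemma lower: "3/4 * real (blocks01 t) \<le> v t"
proof (induction t rule: less_induct)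
  case (less n)
  show ?case
  proof (cases "even n")
    case True
    then obtain m where m: "n = 2*m" by auto
    show ?thesis
    proof (cases "m = 0")
      case True then show ?thesis using m by simp
    next
      case False
      have "3/4 * real (blocks01 m) \<le> v m" using less.IH[of m] m False by simp
      then show ?thesis using m N_even[of m] v_even[of m] by simp
    qed
  next
    case False
    then obtain t where t: "n = 2*t+1" using oddE by blast
    show ?thesis
    proof (cases "t = 0")
      case True
      have "v 1 = 3/2" using v_odd[of 0] by simp
      moreover have "blocks01 1 = 1" using N_odd[of 0] by simp
      ultimately show ?thesis using t True by simp
    next
      case F: False
      have i1: "3/4 * real (blocks01 t) \<le> v t" using less.IH[of t] t by simp
      have i2: "3/4 * real (blocks01 (t+1)) \<le> v (t+1)" using less.IH[of "t+1"] t F by simp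
      have s: "real (blocks01 t) \<le> real (blocks01 (t+1)) + 1" using N_succ_ge[of t] by linarith
      show ?thesis
      proof (cases "even t")
        case True
        have "real (blocks01 t) \<le> real (blocks01 (t+1))" using N_even_succ[OF True] by simp
        then show ?thesis using t i1 i2 N_odd[of t] v_odd[of t] True by simp
      next
        case F2: False
        have "real (blocks01 n) = real (blocks01 t)" using t N_odd[of t] F2 by simp
        moreover have "v n = (v t + v (t+1))/2 + 3/4" using t v_odd[of t] by simp
        ultimately show ?thesis using i1 i2 s by argo
      qed
    qed
  qed
qed


lemma upper_aux:
  "5 * real (blocks01 n) - v n \<ge> 0 \<and>
   (odd n \<longrightarrow> 5 * real (blocks01 n) - v n \<ge> 1) \<and>
   (n mod 4 = 1 \<longrightarrow> 5 * real (blocks01 n) - v n \<ge> 7/2) \<and>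
   (odd n \<longrightarrow> 5 * real (blocks01 (n+1)) - v (n+1) + 5 * (real (blocks01 n) - real (blocks01 (n+1))) \<ge> 5/2)"
proof (induction n rule: less_induct)
  case (less n)
  show ?case
  proof (cases "even n")
    case True
    then obtain m where m: "n = 2*m" by auto
    show ?thesis
    proof (cases "m = 0")
      case True then show ?thesis using m by (simp; linarith)
    next
      case False
      have "5 * real (blocks01 m) - v m \<ge> 0" "odd m \<longrightarrow> 5 * real (blocks01 m) - v m \<ge> 1"
        using less.IH[of m] m False by simp_all
      moreover have "n mod 4 \<noteq> 1" using True by presburger
      ultimately show ?thesis using m N_even[of m] v_even[of m] True by auto
    qed
  next
    case False
    then obtain t where t: "n = 2*t+1" using oddE by blast
    show ?thesis
    proof (cases "t = 0")
      case True
      have "v 1 = 3/2" using v_odd[of 0] by (simp; linarith)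
      moreover have "v 2 = 5/2" using v_even[of 1] calculation by (simp; linarith)
      moreover have "blocks01 1 = 1" using N_odd[of 0] by (simp; linarith)
      moreover have "blocks01 2 = 1" using N_even[of 1] calculation by (simp; linarith)
      moreover have "blocks01 (Suc (Suc 0)) = 1" "v (Suc (Suc 0)) = 5/2"
        using calculation by (simp_all add: numeral_2_eq_2)
      ultimately show ?thesis using t True by (simp; linarith)
    next
      case F: False
      define u where "u k = 5 * real (blocks01 k) - v k" for k
      have IHt: "u t \<ge> 0" "odd t \<longrightarrow> u t \<ge> 1"
        "odd t \<longrightarrow> u (t+1) + 5 * (real (blocks01 t) - real (blocks01 (t+1))) \<ge> 5/2"
        using less.IH[of t] t unfolding u_def by simp_all
      have IHs: "u (t+1) \<ge> 0" "odd (t+1) \<longrightarrow> u (t+1) \<ge> 1"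
        "(t+1) mod 4 = 1 \<longrightarrow> u (t+1) \<ge> 7/2"
        using less.IH[of "t+1"] t F unfolding u_def by simp_all
      have s1: "real (blocks01 (t+1)) \<le> real (blocks01 t) + 1" using N_succ_le[of t] by linarith
      have une: "u n = 17/4 + (u t + u (t+1))/2 + 5/2 * (real (blocks01 t) - real (blocks01 (t+1)))"
        if "even t" unfolding u_def using t N_odd[of t] v_odd[of t] that by (simp add: field_simps)
      have uno: "u n = -3/4 + (u t + u (t+1))/2 + 5/2 * (real (blocks01 t) - real (blocks01 (t+1)))"
        if "odd t" unfolding u_def using t N_odd[of t] v_odd[of t] that by (simp add: field_simps)
      have B: "u n \<ge> 1"
      proof (cases "even t")
        case True
        then show ?thesis using une IHt IHs s1 by (auto simp: field_simps)
      next
        case F2: False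
        then show ?thesis using uno IHt IHs by (auto simp: field_simps)
      qed
      have C: "n mod 4 = 1 \<longrightarrow> u n \<ge> 7/2"
      proof
        assume h: "n mod 4 = 1"
        then have et: "even t" using t by presburger
        show "u n \<ge> 7/2"
        proof (cases "t mod 4 = 0")
          case True
          then have "(t+1) mod 4 = 1" by presburger
          then show ?thesis using une IHt IHs s1 et by (auto simp: field_simps)
        next
          case False
          then have "t mod 4 = 2" using et by presburger
          then have "blocks01 (t+1) = blocks01 t" by (rule N_mod2)
          then show ?thesis using une IHt IHs et by (auto simp: field_simps)
        qed
      qed
      have D: "u (n+1) + 5 * (real (blocks01 n) - real (blocks01 (n+1))) \<ge> 5/2"
      proof -
        have e: "n + 1 = 2*(t+1)" using t by (simp; linarith)
        have Nn1: "real (blocks01 (n+1)) = real (blocks01 (t+1))" using N_even[of "t+1"] unfolding e by simp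
        have Nn: "real (blocks01 n) = real (blocks01 t) + (if even t then 1 else 0)" using t N_odd by simp
        have un1: "u (n+1) = u (t+1) - (if even t then 1 else 0)"
          unfolding u_def using e N_even[of "t+1"] v_even[of "t+1"] by (simp; linarith)
        show ?thesis
        proof (cases "even t")
          case F2: False
          then show ?thesis using Nn1 Nn un1 IHt by (auto simp: field_simps)
        next
          case et: True
          show ?thesis
          proof (cases "t mod 4 = 0")
            case True
            then have "(t+1) mod 4 = 1" by presburger
            then show ?thesis using Nn1 Nn un1 IHs s1 et by (auto simp: field_simps)
          next
            case False
            then have "t mod 4 = 2" using et by presburger
            then have "blocks01 (t+1) = blocks01 t" by (rule N_mod2)
            then show ?thesis using Nn1 Nn un1 IHs et by (auto simp: field_simps)
          qed
        qed
      qed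
      show ?thesis using B C D False unfolding u_def by (simp; linarith)
    qed
  qed
qed

theorem proposition3p11:
  fixes t :: nat
  shows "3/4 * real (blocks01 t) \<le> v t \<and> v t \<le> 5 * real (blocks01 t)"
  using lower[of t] upper_aux[of t] by (simp; linarith)

end
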